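(* Let $R$ be a commutative ring, $s\in R$, and let $A\in M_2(R;s)$ with $A\notin J\big(M_2(R;s)\big)$. If $\det_s(A)\in J(R)$ and $tr(A)\in J(R)$, then $A$ is not strongly $J$-clean in $M_2(R;s)$.
   Context: $J(\cdot)$ denotes the Jacobson radical. For a commutative ring $R$ and $s\in R$, $M_2(R;s)$ denotes the ring whose elements are the $2\times 2$ arrays $\left[\begin{smallmatrix} a&b\\ c&d\end{smallmatrix}\right]$ with $a,b,c,d\in R$, with componentwise addition and multiplication $\left[\begin{smallmatrix} a&b\\ c&d\end{smallmatrix}\right]\left[\begin{smallmatrix} a'&b'\\ c'&d'\end{smallmatrix}\right]=\left[\begin{smallmatrix} aa'+s^2bc'&ab'+bd'\\ ca'+dc'&s^2cb'+dd'\end{smallmatrix}\right]$. For $A=\left[\begin{smallmatrix} a&b\\ c&d\end{smallmatrix}\right]$, $\det_s(A)=ad-s^2bc$ and $tr(A)=a+d$. An element $a$ of a ring $T$ is strongly $J$-clean if there is an idempotent $e\in T$ with $ae=ea$ and $a-e\in J(T)$. *)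

theory Defs
  imports "HOL-Algebra.Ring"
begin

text \<open>Elements of M_2(R;s) are 2x2 arrays [a b; c d], represented as tuples (a,b,c,d).\<close>
type_synonym 'a m2 = "'a \<times> 'a \<times> 'a \<times> 'a"

definition M2s :: "('a, 'b) ring_scheme \<Rightarrow> 'a \<Rightarrow> 'a m2 ring" where
  "M2s R s = \<lparr> carrier = {(a, b, c, d). a \<in> carrier R \<and> b \<in> carrier R \<and> c \<in> carrier R \<and> d \<in> carrier R},
     mult = (\<lambda>(a, b, c, d) (a', b', c', d').
        (a \<otimes>\<^bsub>R\<^esub> a' \<oplus>\<^bsub>R\<^esub> s \<otimes>\<^bsub>R\<^esub> s \<otimes>\<^bsub>R\<^esub> b \<otimes>\<^bsub>R\<^esub> c',
         a \<otimes>\<^bsub>R\<^esub> b' \<oplus>\<^bsub>R\<^esub> b \<otimes>\<^bsub>R\<^esub> d',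
         c \<otimes>\<^bsub>R\<^esub> a' \<oplus>\<^bsub>R\<^esub> d \<otimes>\<^bsub>R\<^esub> c',
         s \<otimes>\<^bsub>R\<^esub> s \<otimes>\<^bsub>R\<^esub> c \<otimes>\<^bsub>R\<^esub> b' \<oplus>\<^bsub>R\<^esub> d \<otimes>\<^bsub>R\<^esub> d')),
     one = (\<one>\<^bsub>R\<^esub>, \<zero>\<^bsub>R\<^esub>, \<zero>\<^bsub>R\<^esub>, \<one>\<^bsub>R\<^esub>),
     zero = (\<zero>\<^bsub>R\<^esub>, \<zero>\<^bsub>R\<^esub>, \<zero>\<^bsub>R\<^esub>, \<zero>\<^bsub>R\<^esub>),
     add = (\<lambda>(a, b, c, d) (a', b', c', d').
        (a \<oplus>\<^bsub>R\<^esub> a', b \<oplus>\<^bsub>R\<^esub> b', c \<oplus>\<^bsub>R\<^esub> c', d \<oplus>\<^bsub>R\<^esub> d')) \<rparr>"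

definition det_s :: "('a, 'b) ring_scheme \<Rightarrow> 'a \<Rightarrow> 'a m2 \<Rightarrow> 'a" where
  "det_s R s A = (case A of (a, b, c, d) \<Rightarrow> a \<otimes>\<^bsub>R\<^esub> d \<ominus>\<^bsub>R\<^esub> s \<otimes>\<^bsub>R\<^esub> s \<otimes>\<^bsub>R\<^esub> b \<otimes>\<^bsub>R\<^esub> c)"

definition tr :: "('a, 'b) ring_scheme \<Rightarrow> 'a m2 \<Rightarrow> 'a" where
  "tr R A = (case A of (a, b, c, d) \<Rightarrow> a \<oplus>\<^bsub>R\<^esub> d)"

definition jacobson :: "('a, 'b) ring_scheme \<Rightarrow> 'a set" where
  "jacobson T = {a \<in> carrier T. \<forall>x \<in> carrier T. \<one>\<^bsub>T\<^esub> \<ominus>\<^bsub>T\<^esub> x \<otimes>\<^bsub>T\<^esub> a \<in> Units T}"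

definition strongly_J_clean :: "('a, 'b) ring_scheme \<Rightarrow> 'a \<Rightarrow> bool" where
  "strongly_J_clean T a = (\<exists>e \<in> carrier T. e \<otimes>\<^bsub>T\<^esub> e = e \<and> a \<otimes>\<^bsub>T\<^esub> e = e \<otimes>\<^bsub>T\<^esub> a
      \<and> a \<ominus>\<^bsub>T\<^esub> e \<in> jacobson T)"

end

theory Submission
  imports Defs
begin

context ring begin

lemma rdiff: "a \<in> carrier R \<Longrightarrow> b \<in> carrier R \<Longrightarrow> c \<in> carrier R \<Longrightarrow> a \<otimes> (c \<ominus> b) = a \<otimes> c \<ominus> a \<otimes> b"
  by (simp add: minus_eq r_distr r_minus)

lemma ldiff: "a \<in> carrier R \<Longrightarrow> b \<in> carrier R \<Longrightarrow> c \<in> carrier R \<Longrightarrow> (c \<ominus> b) \<otimes> a = c \<otimes> a \<ominus> b \<otimes> a"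
  by (simp add: minus_eq l_distr l_minus)

lemma jac_carrier: "x \<in> jacobson R \<Longrightarrow> x \<in> carrier R"
  by (simp add: jacobson_def)

lemma jac_l:
  assumes "x \<in> jacobson R" "y \<in> carrier R"
  shows "y \<otimes> x \<in> jacobson R"
proof -
  have x: "x \<in> carrier R" using assms by (simp add: jacobson_def)
  have "\<forall>z\<in>carrier R. \<one> \<ominus> z \<otimes> (y \<otimes> x) \<in> Units R"
  proof
    fix z assume z: "z \<in> carrier R"
    have "\<one> \<ominus> (z \<otimes> y) \<otimes> x \<in> Units R" using assms z by (simp add: jacobson_def)
    thus "\<one> \<ominus> z \<otimes> (y \<otimes> x) \<in> Units R" using x z assms(2) by (simp add: m_assoc)
  qed
  thus ?thesis using x assms by (simp add: jacobson_def)
qed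

lemma jac_add:
  assumes "x \<in> jacobson R" "y \<in> jacobson R"
  shows "x \<oplus> y \<in> jacobson R"
proof -
  have x: "x \<in> carrier R" and y: "y \<in> carrier R" using assms by (auto simp add: jacobson_def)
  have "\<forall>z\<in>carrier R. \<one> \<ominus> z \<otimes> (x \<oplus> y) \<in> Units R"
  proof
    fix z assume z: "z \<in> carrier R"
    have u: "\<one> \<ominus> z \<otimes> x \<in> Units R" using assms z by (simp add: jacobson_def)
    define i where "i = inv (\<one> \<ominus> z \<otimes> x)"
    have i: "i \<in> carrier R" "(\<one> \<ominus> z \<otimes> x) \<otimes> i = \<one>" using u by (auto simp: i_def)
    define w where "w = i \<otimes> z"
    have w: "w \<in> carrier R" using i z by (simp add: w_def)
    have v: "\<one> \<ominus> w \<otimes> y \<in> Units R" using assms w by (simp add: jacobson_def)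
    have "(\<one> \<ominus> z \<otimes> x) \<otimes> (\<one> \<ominus> w \<otimes> y) = (\<one> \<ominus> z \<otimes> x) \<ominus> ((\<one> \<ominus> z \<otimes> x) \<otimes> i) \<otimes> z \<otimes> y"
      using i(1) z x y unfolding w_def by (simp add: rdiff m_assoc)
    also have "\<dots> = (\<one> \<ominus> z \<otimes> x) \<ominus> \<one> \<otimes> z \<otimes> y" by (simp only: i(2))
    also have "\<dots> = \<one> \<ominus> z \<otimes> (x \<oplus> y)" using z x y by algebra
    finally have eq: "(\<one> \<ominus> z \<otimes> x) \<otimes> (\<one> \<ominus> w \<otimes> y) = \<one> \<ominus> z \<otimes> (x \<oplus> y)" .
    show "\<one> \<ominus> z \<otimes> (x \<oplus> y) \<in> Units R" using Units_m_closed[OF u v] eq by simp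
  qed
  thus ?thesis using x y by (simp add: jacobson_def)
qed

lemma jac_neg:
  assumes "x \<in> jacobson R"
  shows "\<ominus> x \<in> jacobson R"
proof -
  have x: "x \<in> carrier R" using assms by (simp add: jacobson_def)
  have "\<ominus> x = (\<ominus> \<one>) \<otimes> x" using x by algebra
  thus ?thesis using jac_l[OF assms, of "\<ominus> \<one>"] by simp
qed

lemma jac_minus:
  assumes "x \<in> jacobson R" "y \<in> jacobson R"
  shows "x \<ominus> y \<in> jacobson R"
  using jac_add[OF assms(1) jac_neg[OF assms(2)]] by (simp add: minus_eq)

lemma jac_idem:
  assumes "e \<in> jacobson R" "e \<otimes> e = e"
  shows "e = \<zero>"
proof -
  have e: "e \<in> carrier R" using assms by (simp add: jacobson_def)
  have "\<forall>x\<in>carrier R. \<one> \<ominus> x \<otimes> e \<in> Units R" using assms by (simp add: jacobson_def)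
  hence "\<one> \<ominus> \<one> \<otimes> e \<in> Units R" by blast
  hence u: "\<one> \<ominus> e \<in> Units R" using e by simp
  define i where "i = inv (\<one> \<ominus> e)"
  have i: "i \<in> carrier R" "i \<otimes> (\<one> \<ominus> e) = \<one>" using u by (auto simp: i_def)
  have "e = (i \<otimes> (\<one> \<ominus> e)) \<otimes> e" by (simp only: i(2) l_one[OF e])
  also have "\<dots> = i \<otimes> (e \<ominus> e \<otimes> e)" using i(1) e by (simp add: m_assoc rdiff ldiff)
  also have "\<dots> = \<zero>" using assms i e by (simp add: r_neg minus_eq)
  finally show ?thesis .
qed

end


lemma M2s_ring:
  assumes "cring R" "s \<in> carrier R"
  shows "ring (M2s R s)"
proof -
  interpret cring R by fact
  note s = assms(2)
  show ?thesis
  proof (rule ringI)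
    show "abelian_group (M2s R s)"
      apply (rule abelian_groupI)
      unfolding M2s_def
           apply (auto simp: a_ac)
      done
    show "monoid (M2s R s)"
      apply (rule monoidI)
      unfolding M2s_def using s by (auto; algebra)+
  qed (unfold M2s_def, use s in \<open>(auto; algebra)+\<close>)
qed


lemma M2s_simps:
  "(a,b,c,d) \<in> carrier (M2s R s) \<longleftrightarrow> a \<in> carrier R \<and> b \<in> carrier R \<and> c \<in> carrier R \<and> d \<in> carrier R"
  "(a,b,c,d) \<otimes>\<^bsub>M2s R s\<^esub> (a',b',c',d') =
        (a \<otimes>\<^bsub>R\<^esub> a' \<oplus>\<^bsub>R\<^esub> s \<otimes>\<^bsub>R\<^esub> s \<otimes>\<^bsub>R\<^esub> b \<otimes>\<^bsub>R\<^esub> c',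
         a \<otimes>\<^bsub>R\<^esub> b' \<oplus>\<^bsub>R\<^esub> b \<otimes>\<^bsub>R\<^esub> d',
         c \<otimes>\<^bsub>R\<^esub> a' \<oplus>\<^bsub>R\<^esub> d \<otimes>\<^bsub>R\<^esub> c',
         s \<otimes>\<^bsub>R\<^esub> s \<otimes>\<^bsub>R\<^esub> c \<otimes>\<^bsub>R\<^esub> b' \<oplus>\<^bsub>R\<^esub> d \<otimes>\<^bsub>R\<^esub> d')"
  "(a,b,c,d) \<oplus>\<^bsub>M2s R s\<^esub> (a',b',c',d') = (a \<oplus>\<^bsub>R\<^esub> a', b \<oplus>\<^bsub>R\<^esub> b', c \<oplus>\<^bsub>R\<^esub> c', d \<oplus>\<^bsub>R\<^esub> d')"
  "\<one>\<^bsub>M2s R s\<^esub> = (\<one>\<^bsub>R\<^esub>, \<zero>\<^bsub>R\<^esub>, \<zero>\<^bsub>R\<^esub>, \<one>\<^bsub>R\<^esub>)"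
  "\<zero>\<^bsub>M2s R s\<^esub> = (\<zero>\<^bsub>R\<^esub>, \<zero>\<^bsub>R\<^esub>, \<zero>\<^bsub>R\<^esub>, \<zero>\<^bsub>R\<^esub>)"
  by (simp_all add: M2s_def)

lemma M2s_minus:
  assumes "cring R" "s \<in> carrier R" "(a,b,c,d) \<in> carrier (M2s R s)"
  shows "\<ominus>\<^bsub>M2s R s\<^esub> (a,b,c,d) = (\<ominus>\<^bsub>R\<^esub> a, \<ominus>\<^bsub>R\<^esub> b, \<ominus>\<^bsub>R\<^esub> c, \<ominus>\<^bsub>R\<^esub> d)"
proof -
  interpret cring R by fact
  interpret M: ring "M2s R s" by (rule M2s_ring[OF assms(1,2)])
  show ?thesis
    apply (rule M.minus_equality)
    using assms(3) by (auto simp: M2s_simps l_neg)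
qed

lemma M2s_minus2:
  assumes "cring R" "s \<in> carrier R" "(a,b,c,d) \<in> carrier (M2s R s)" "(a',b',c',d') \<in> carrier (M2s R s)"
  shows "(a,b,c,d) \<ominus>\<^bsub>M2s R s\<^esub> (a',b',c',d') = (a \<ominus>\<^bsub>R\<^esub> a', b \<ominus>\<^bsub>R\<^esub> b', c \<ominus>\<^bsub>R\<^esub> c', d \<ominus>\<^bsub>R\<^esub> d')"
  using assms by (simp add: a_minus_def M2s_minus M2s_simps)

lemma M2s_unit:
  fixes R (structure)
  assumes "cring R" "s \<in> carrier R" "(a,b,c,d) \<in> carrier (M2s R s)"
    and "a \<otimes>\<^bsub>R\<^esub> d \<ominus>\<^bsub>R\<^esub> s \<otimes>\<^bsub>R\<^esub> s \<otimes>\<^bsub>R\<^esub> b \<otimes>\<^bsub>R\<^esub> c \<in> Units R"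
  shows "(a,b,c,d) \<in> Units (M2s R s)"
proof -
  interpret cring R by fact
  define \<delta> where "\<delta> = a \<otimes> d \<ominus> s \<otimes> s \<otimes> b \<otimes> c"
  define i where "i = inv \<delta>"
  have abcd: "a \<in> carrier R" "b \<in> carrier R" "c \<in> carrier R" "d \<in> carrier R"
    using assms(3) by (auto simp: M2s_simps)
  note s = assms(2)
  have i: "i \<in> carrier R" "i \<otimes> \<delta> = \<one>" using assms(4) by (auto simp: i_def \<delta>_def)
  define X where "X = (i \<otimes> d, \<ominus> (i \<otimes> b), \<ominus> (i \<otimes> c), i \<otimes> a)"
  have X: "X \<in> carrier (M2s R s)" using i(1) abcd by (simp add: X_def M2s_simps)
  have "X \<otimes>\<^bsub>M2s R s\<^esub> (a,b,c,d) = (i \<otimes> \<delta>, \<zero>, \<zero>, i \<otimes> \<delta>)"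
    unfolding X_def \<delta>_def M2s_simps using i(1) abcd s
    by (intro prod_eqI; simp; algebra)
  hence 1: "X \<otimes>\<^bsub>M2s R s\<^esub> (a,b,c,d) = \<one>\<^bsub>M2s R s\<^esub>" using i by (simp add: M2s_simps)
  have "(a,b,c,d) \<otimes>\<^bsub>M2s R s\<^esub> X = (i \<otimes> \<delta>, \<zero>, \<zero>, i \<otimes> \<delta>)"
    unfolding X_def \<delta>_def M2s_simps using i(1) abcd s
    by (intro prod_eqI; simp; algebra)
  hence 2: "(a,b,c,d) \<otimes>\<^bsub>M2s R s\<^esub> X = \<one>\<^bsub>M2s R s\<^esub>" using i by (simp add: M2s_simps)
  show ?thesis unfolding Units_def using 1 2 X assms(3) by blast
qed


lemma diag_jac:
  fixes R (structure)
  assumes "cring R" "s \<in> carrier R" "t \<in> jacobson R"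
  shows "(t, \<zero>, \<zero>, t) \<in> jacobson (M2s R s)"
proof -
  interpret cring R by fact
  note s = assms(2)
  have t: "t \<in> carrier R" using assms(3) by (simp add: jacobson_def)
  have "\<forall>X\<in>carrier (M2s R s). \<one>\<^bsub>M2s R s\<^esub> \<ominus>\<^bsub>M2s R s\<^esub> X \<otimes>\<^bsub>M2s R s\<^esub> (t, \<zero>, \<zero>, t) \<in> Units (M2s R s)"
  proof
    fix X assume X: "X \<in> carrier (M2s R s)"
    obtain x1 x2 x3 x4 where Xe: "X = (x1,x2,x3,x4)" by (cases X) auto
    have x: "x1 \<in> carrier R" "x2 \<in> carrier R" "x3 \<in> carrier R" "x4 \<in> carrier R"
      using X Xe by (auto simp: M2s_simps)
    define y where "y = x1 \<oplus> x4 \<ominus> t \<otimes> x1 \<otimes> x4 \<oplus> s \<otimes> s \<otimes> t \<otimes> x2 \<otimes> x3"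
    have y: "y \<in> carrier R" using x s t by (simp add: y_def)
    have u: "\<one> \<ominus> y \<otimes> t \<in> Units R" using assms(3) y by (simp add: jacobson_def)
    define p1 where "p1 = x1 \<otimes> t \<oplus> s \<otimes> s \<otimes> x2 \<otimes> \<zero>"
    define p2 where "p2 = x1 \<otimes> \<zero> \<oplus> x2 \<otimes> t"
    define p3 where "p3 = x3 \<otimes> t \<oplus> x4 \<otimes> \<zero>"
    define p4 where "p4 = s \<otimes> s \<otimes> x3 \<otimes> \<zero> \<oplus> x4 \<otimes> t"
    have eq: "\<one>\<^bsub>M2s R s\<^esub> \<ominus>\<^bsub>M2s R s\<^esub> X \<otimes>\<^bsub>M2s R s\<^esub> (t, \<zero>, \<zero>, t)
       = (\<one> \<ominus> p1, \<zero> \<ominus> p2, \<zero> \<ominus> p3, \<one> \<ominus> p4)"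
      unfolding Xe M2s_simps p1_def p2_def p3_def p4_def
      by (rule M2s_minus2[OF assms(1,2)]) (use x s t in \<open>simp_all add: M2s_simps\<close>)
    have "(\<one> \<ominus> p1) \<otimes> (\<one> \<ominus> p4) \<ominus> s \<otimes> s \<otimes> (\<zero> \<ominus> p2) \<otimes> (\<zero> \<ominus> p3) = \<one> \<ominus> y \<otimes> t"
      unfolding p1_def p2_def p3_def p4_def y_def using x s t by algebra
    hence "(\<one> \<ominus> p1, \<zero> \<ominus> p2, \<zero> \<ominus> p3, \<one> \<ominus> p4) \<in> Units (M2s R s)"
      using u by (intro M2s_unit[OF assms(1,2)])
        (auto simp: M2s_simps p1_def p2_def p3_def p4_def x s t)
    thus "\<one>\<^bsub>M2s R s\<^esub> \<ominus>\<^bsub>M2s R s\<^esub> X \<otimes>\<^bsub>M2s R s\<^esub> (t, \<zero>, \<zero>, t) \<in> Units (M2s R s)"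
      using eq by simp
  qed
  thus ?thesis using t by (simp add: jacobson_def M2s_simps)
qed

theorem proposition3p2:
  fixes R :: "('a, 'b) ring_scheme" and s :: 'a and A :: "'a m2"
  assumes "cring R"
    and "s \<in> carrier R"
    and "A \<in> carrier (M2s R s)"
    and "A \<notin> jacobson (M2s R s)"
    and "det_s R s A \<in> jacobson R"
    and "tr R A \<in> jacobson R"
  shows "\<not> strongly_J_clean (M2s R s) A"
proof
  assume "strongly_J_clean (M2s R s) A"
  then obtain e where e: "e \<in> carrier (M2s R s)" "e \<otimes>\<^bsub>M2s R s\<^esub> e = e"
    "A \<otimes>\<^bsub>M2s R s\<^esub> e = e \<otimes>\<^bsub>M2s R s\<^esub> A" "A \<ominus>\<^bsub>M2s R s\<^esub> e \<in> jacobson (M2s R s)"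
    unfolding strongly_J_clean_def by blast
  interpret R: cring R by fact
  interpret M: ring "M2s R s" by (rule M2s_ring[OF assms(1,2)])
  note s = assms(2)
  obtain a b c d where Ae: "A = (a,b,c,d)" by (cases A) auto
  have abcd: "a \<in> carrier R" "b \<in> carrier R" "c \<in> carrier R" "d \<in> carrier R"
    using assms(3) Ae by (auto simp: M2s_simps)
  define t where "t = tr R A"
  define \<delta> where "\<delta> = det_s R s A"
  have t: "t \<in> jacobson R" "t \<in> carrier R" using assms(6) by (auto simp: t_def jacobson_def)
  have dl: "\<delta> \<in> jacobson R" "\<delta> \<in> carrier R" using assms(5) by (auto simp: \<delta>_def jacobson_def)
  have nd: "\<ominus>\<^bsub>R\<^esub> \<delta> \<in> jacobson R" using R.jac_neg[OF dl(1)] .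
  have D1: "(t, \<zero>\<^bsub>R\<^esub>, \<zero>\<^bsub>R\<^esub>, t) \<in> jacobson (M2s R s)" by (rule diag_jac[OF assms(1,2) t(1)])
  have D2: "(\<ominus>\<^bsub>R\<^esub> \<delta>, \<zero>\<^bsub>R\<^esub>, \<zero>\<^bsub>R\<^esub>, \<ominus>\<^bsub>R\<^esub> \<delta>) \<in> jacobson (M2s R s)" by (rule diag_jac[OF assms(1,2) nd])
  have CH: "A \<otimes>\<^bsub>M2s R s\<^esub> A = A \<otimes>\<^bsub>M2s R s\<^esub> (t, \<zero>\<^bsub>R\<^esub>, \<zero>\<^bsub>R\<^esub>, t) \<oplus>\<^bsub>M2s R s\<^esub> (\<ominus>\<^bsub>R\<^esub> \<delta>, \<zero>\<^bsub>R\<^esub>, \<zero>\<^bsub>R\<^esub>, \<ominus>\<^bsub>R\<^esub> \<delta>)"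
    unfolding Ae M2s_simps t_def \<delta>_def tr_def det_s_def using abcd s
    by (intro prod_eqI; simp; algebra)
  have comm: "A \<otimes>\<^bsub>M2s R s\<^esub> (t, \<zero>\<^bsub>R\<^esub>, \<zero>\<^bsub>R\<^esub>, t) = (t, \<zero>\<^bsub>R\<^esub>, \<zero>\<^bsub>R\<^esub>, t) \<otimes>\<^bsub>M2s R s\<^esub> A"
    unfolding Ae M2s_simps using abcd s t(2)
    by (intro prod_eqI; simp; algebra)
  have A2: "A \<otimes>\<^bsub>M2s R s\<^esub> A \<in> jacobson (M2s R s)"
    unfolding CH by (rule M.jac_add[OF M.jac_l[OF D1 assms(3)] D2])
  have P: "(A \<oplus>\<^bsub>M2s R s\<^esub> e) \<otimes>\<^bsub>M2s R s\<^esub> (A \<ominus>\<^bsub>M2s R s\<^esub> e) \<in> jacobson (M2s R s)"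
    using M.jac_l[OF e(4)] assms(3) e(1) by simp
  have "(A \<oplus>\<^bsub>M2s R s\<^esub> e) \<otimes>\<^bsub>M2s R s\<^esub> (A \<ominus>\<^bsub>M2s R s\<^esub> e)
      = (A \<otimes>\<^bsub>M2s R s\<^esub> A \<ominus>\<^bsub>M2s R s\<^esub> A \<otimes>\<^bsub>M2s R s\<^esub> e) \<oplus>\<^bsub>M2s R s\<^esub> (e \<otimes>\<^bsub>M2s R s\<^esub> A \<ominus>\<^bsub>M2s R s\<^esub> e \<otimes>\<^bsub>M2s R s\<^esub> e)"
    using assms(3) e(1) by (simp add: M.l_distr M.r_distr M.r_minus M.minus_eq M.minus_add M.a_ac)
  also have "\<dots> = (A \<otimes>\<^bsub>M2s R s\<^esub> A \<ominus>\<^bsub>M2s R s\<^esub> A \<otimes>\<^bsub>M2s R s\<^esub> e) \<oplus>\<^bsub>M2s R s\<^esub> (A \<otimes>\<^bsub>M2s R s\<^esub> e \<ominus>\<^bsub>M2s R s\<^esub> e)"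
    using e(2,3) by simp
  finally have PE: "(A \<oplus>\<^bsub>M2s R s\<^esub> e) \<otimes>\<^bsub>M2s R s\<^esub> (A \<ominus>\<^bsub>M2s R s\<^esub> e) = \<dots>" .
  have "e = A \<otimes>\<^bsub>M2s R s\<^esub> A \<ominus>\<^bsub>M2s R s\<^esub> ((A \<otimes>\<^bsub>M2s R s\<^esub> A \<ominus>\<^bsub>M2s R s\<^esub> A \<otimes>\<^bsub>M2s R s\<^esub> e) \<oplus>\<^bsub>M2s R s\<^esub> (A \<otimes>\<^bsub>M2s R s\<^esub> e \<ominus>\<^bsub>M2s R s\<^esub> e))"
    using assms(3) e(1) by algebra
  hence "e \<in> jacobson (M2s R s)" using M.jac_minus[OF A2 P] PE by simp
  hence "e = \<zero>\<^bsub>M2s R s\<^esub>" using M.jac_idem e(2) by blast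
  hence "A \<in> jacobson (M2s R s)" using e(4) assms(3) by (simp add: M.minus_eq)
  thus False using assms(4) by simp
qed

end
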